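(* There is an absolute constant $C>0$ such that for every finite field $\mathbb{F}_q$ with $q$ elements and every Nikodym set $B\subset\mathbb{F}_q^2$ (i.e. for every $x\in\mathbb{F}_q^2\setminus B$ there exists a line $L\subset\mathbb{F}_q^2$ with $L\cap(\mathbb{F}_q^2\setminus B)=\{x\}$), one has \[|B|\ge \frac{2q^2}{3}-Cq.\] (That is, $|B|\ge \frac{2q^2}{3}+O(q)$ as $q\to\infty$.)
   Context: A line in $\mathbb{F}_q^2$ is a set of the form $\{a+tb: t\in\mathbb{F}_q\}$ with $a,b\in\mathbb{F}_q^2$, $b\neq 0$. *)

theory Defs
  imports "HOL-Algebra.Ring" Complex_Main
begin

definition plane :: "('a, 'm) ring_scheme \<Rightarrow> ('a \<times> 'a) set" where
  "plane R = carrier R \<times> carrier R"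

definition line_through :: "('a, 'm) ring_scheme \<Rightarrow> 'a \<times> 'a \<Rightarrow> 'a \<times> 'a \<Rightarrow> ('a \<times> 'a) set" where
  "line_through R a b =
     {(fst a \<oplus>\<^bsub>R\<^esub> t \<otimes>\<^bsub>R\<^esub> fst b, snd a \<oplus>\<^bsub>R\<^esub> t \<otimes>\<^bsub>R\<^esub> snd b) | t. t \<in> carrier R}"

definition is_line :: "('a, 'm) ring_scheme \<Rightarrow> ('a \<times> 'a) set \<Rightarrow> bool" where
  "is_line R L \<longleftrightarrow> (\<exists>a b. a \<in> plane R \<and> b \<in> plane R \<and> b \<noteq> (\<zero>\<^bsub>R\<^esub>, \<zero>\<^bsub>R\<^esub>)
                          \<and> L = line_through R a b)"

definition nikodym_set :: "('a, 'm) ring_scheme \<Rightarrow> ('a \<times> 'a) set \<Rightarrow> bool" where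
  "nikodym_set R B \<longleftrightarrow> B \<subseteq> plane R \<and>
     (\<forall>x \<in> plane R - B. \<exists>L. is_line R L \<and> L \<inter> (plane R - B) = {x})"

end

theory Submission
  imports Defs
begin

context field begin


lemma solve_dir:
  assumes c: "d1 \<in> carrier R" "d2 \<in> carrier R" "x1 \<in> carrier R" "x2 \<in> carrier R"
    and nz: "(d1, d2) \<noteq> (\<zero>, \<zero>)" and e: "x1 \<otimes> d2 = x2 \<otimes> d1"
  shows "\<exists>t\<in>carrier R. x1 = t \<otimes> d1 \<and> x2 = t \<otimes> d2"
proof (cases "d1 = \<zero>")
  case False
  hence u: "d1 \<in> Units R" using c field_Units by auto
  define t where "t = x1 \<otimes> inv d1"
  have tc: "t \<in> carrier R" using u c by (simp add: t_def)
  have "t \<otimes> d1 = x1 \<otimes> (inv d1 \<otimes> d1)" using u c unfolding t_def by (simp add: m_assoc)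
  also have "\<dots> = x1" using u c by simp
  finally have 1: "x1 = t \<otimes> d1" by simp
  have "t \<otimes> d2 = (x1 \<otimes> d2) \<otimes> inv d1" using u c unfolding t_def by (simp add: m_ac)
  also have "\<dots> = x2 \<otimes> (d1 \<otimes> inv d1)" using u c e by (simp add: m_assoc)
  also have "\<dots> = x2" using u c by simp
  finally show ?thesis using 1 tc by auto
next
  case True
  hence d2: "d2 \<noteq> \<zero>" using nz by auto
  hence u: "d2 \<in> Units R" using c field_Units by auto
  define t where "t = x2 \<otimes> inv d2"
  have tc: "t \<in> carrier R" using u c by (simp add: t_def)
  have "t \<otimes> d2 = x2 \<otimes> (inv d2 \<otimes> d2)" using u c unfolding t_def by (simp add: m_assoc)
  also have "\<dots> = x2" using u c by simp
  finally have 1: "x2 = t \<otimes> d2" by simp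
  have "t \<otimes> d1 = (x2 \<otimes> d1) \<otimes> inv d2" using u c unfolding t_def by (simp add: m_ac)
  also have "\<dots> = (x1 \<otimes> d2) \<otimes> inv d2" using e by simp
  also have "\<dots> = x1 \<otimes> (d2 \<otimes> inv d2)" using u c by (simp add: m_assoc)
  also have "\<dots> = x1" using u c by simp
  finally show ?thesis using 1 tc by auto
qed

lemma minus_zero_eq:
  assumes "a \<in> carrier R" "b \<in> carrier R" "a \<ominus> b = \<zero>" shows "a = b"
proof -
  have "a = (a \<ominus> b) \<oplus> b" using assms(1,2) by algebra
  thus ?thesis using assms by simp
qed

lemma line_eq_cross:
  assumes a: "a \<in> plane R" and d: "d \<in> plane R" and nz: "d \<noteq> (\<zero>, \<zero>)"
    and P: "P \<in> line_through R a d" and Q: "Q \<in> line_through R a d" and PQ: "P \<noteq> Q"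
  shows "line_through R a d = {X \<in> plane R. (fst X \<ominus> fst P) \<otimes> (snd Q \<ominus> snd P) = (snd X \<ominus> snd P) \<otimes> (fst Q \<ominus> fst P)}"
proof -
  obtain a1 a2 d1 d2 where ad: "a = (a1, a2)" "d = (d1, d2)" by fastforce
  have c: "a1 \<in> carrier R" "a2 \<in> carrier R" "d1 \<in> carrier R" "d2 \<in> carrier R"
    using a d ad by (auto simp: plane_def)
  obtain s where s: "s \<in> carrier R" "P = (a1 \<oplus> s \<otimes> d1, a2 \<oplus> s \<otimes> d2)"
    using P ad by (auto simp: line_through_def)
  obtain u where u: "u \<in> carrier R" "Q = (a1 \<oplus> u \<otimes> d1, a2 \<oplus> u \<otimes> d2)"
    using Q ad by (auto simp: line_through_def)
  have su: "s \<noteq> u" using s u PQ by auto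
  have wnz: "u \<ominus> s \<noteq> \<zero>" using su minus_zero_eq s u by metis
  have Q1: "fst Q \<ominus> fst P = (u \<ominus> s) \<otimes> d1" using s u c by simp algebra
  have Q2: "snd Q \<ominus> snd P = (u \<ominus> s) \<otimes> d2" using s u c by simp algebra
  show ?thesis
  proof (intro equalityI subsetI)
    fix X assume "X \<in> line_through R a d"
    then obtain t where t: "t \<in> carrier R" "X = (a1 \<oplus> t \<otimes> d1, a2 \<oplus> t \<otimes> d2)"
      using ad by (auto simp: line_through_def)
    have "X \<in> plane R" using t c by (auto simp: plane_def)
    moreover have "(fst X \<ominus> fst P) \<otimes> (snd Q \<ominus> snd P) = (snd X \<ominus> snd P) \<otimes> (fst Q \<ominus> fst P)"
      unfolding Q1 Q2 using t s u c by simp algebra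
    ultimately show "X \<in> {X \<in> plane R. (fst X \<ominus> fst P) \<otimes> (snd Q \<ominus> snd P) = (snd X \<ominus> snd P) \<otimes> (fst Q \<ominus> fst P)}" by simp
  next
    fix X assume X: "X \<in> {X \<in> plane R. (fst X \<ominus> fst P) \<otimes> (snd Q \<ominus> snd P) = (snd X \<ominus> snd P) \<otimes> (fst Q \<ominus> fst P)}"
    obtain X1 X2 where XX: "X = (X1, X2)" by fastforce
    have Xc: "X1 \<in> carrier R" "X2 \<in> carrier R" using X XX by (auto simp: plane_def)
    have Pc: "fst P \<in> carrier R" "snd P \<in> carrier R" using s c by auto
    have wc: "u \<ominus> s \<in> carrier R" using u s by simp
    have "(u \<ominus> s) \<otimes> ((X1 \<ominus> fst P) \<otimes> d2) = (u \<ominus> s) \<otimes> ((X2 \<ominus> snd P) \<otimes> d1)"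
    proof -
      have "(u \<ominus> s) \<otimes> ((X1 \<ominus> fst P) \<otimes> d2) = (X1 \<ominus> fst P) \<otimes> ((u \<ominus> s) \<otimes> d2)"
        using wc Xc Pc c by algebra
      also have "\<dots> = (X2 \<ominus> snd P) \<otimes> ((u \<ominus> s) \<otimes> d1)" using X XX Q1 Q2 by simp
      also have "\<dots> = (u \<ominus> s) \<otimes> ((X2 \<ominus> snd P) \<otimes> d1)" using wc Xc Pc c by algebra
      finally show ?thesis .
    qed
    hence e: "(X1 \<ominus> fst P) \<otimes> d2 = (X2 \<ominus> snd P) \<otimes> d1"
      using m_lcancel[OF wnz wc] Xc Pc c by simp
    obtain t where t: "t \<in> carrier R" "X1 \<ominus> fst P = t \<otimes> d1" "X2 \<ominus> snd P = t \<otimes> d2"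
      using solve_dir[OF c(3,4) _ _ _ e] Xc Pc nz ad by auto
    have "X1 = fst P \<oplus> (X1 \<ominus> fst P)" using Xc Pc by algebra
    also have "\<dots> = a1 \<oplus> (s \<oplus> t) \<otimes> d1" using t s c by simp algebra
    finally have 1: "X1 = a1 \<oplus> (s \<oplus> t) \<otimes> d1" .
    have "X2 = snd P \<oplus> (X2 \<ominus> snd P)" using Xc Pc by algebra
    also have "\<dots> = a2 \<oplus> (s \<oplus> t) \<otimes> d2" using t s c by simp algebra
    finally have 2: "X2 = a2 \<oplus> (s \<oplus> t) \<otimes> d2" .
    show "X \<in> line_through R a d" unfolding line_through_def ad XX using 1 2 t s
      by auto
  qed
qed

lemma line_subset_plane:
  assumes a: "a \<in> plane R" and d: "d \<in> plane R"
  shows "line_through R a d \<subseteq> plane R"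
  using a d by (auto simp: line_through_def plane_def mem_Times_iff)

lemma line_card:
  assumes a: "a \<in> plane R" and d: "d \<in> plane R" and nz: "d \<noteq> (\<zero>, \<zero>)"
  shows "card (line_through R a d) = card (carrier R)"
proof -
  obtain a1 a2 d1 d2 where ad: "a = (a1, a2)" "d = (d1, d2)" by fastforce
  have c: "a1 \<in> carrier R" "a2 \<in> carrier R" "d1 \<in> carrier R" "d2 \<in> carrier R"
    using a d ad by (auto simp: plane_def)
  let ?f = "\<lambda>t. (a1 \<oplus> t \<otimes> d1, a2 \<oplus> t \<otimes> d2)"
  have img: "line_through R a d = ?f ` carrier R"
    unfolding line_through_def ad by auto
  have "inj_on ?f (carrier R)"
  proof (rule inj_onI)
    fix t t' assume t: "t \<in> carrier R" "t' \<in> carrier R" and eq: "?f t = ?f t'"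
    have "t \<otimes> d1 = (a1 \<oplus> t \<otimes> d1) \<ominus> a1" using t c by algebra
    also have "\<dots> = (a1 \<oplus> t' \<otimes> d1) \<ominus> a1" using eq by simp
    also have "\<dots> = t' \<otimes> d1" using t c by algebra
    finally have e1: "t \<otimes> d1 = t' \<otimes> d1" .
    have "t \<otimes> d2 = (a2 \<oplus> t \<otimes> d2) \<ominus> a2" using t c by algebra
    also have "\<dots> = (a2 \<oplus> t' \<otimes> d2) \<ominus> a2" using eq by simp
    also have "\<dots> = t' \<otimes> d2" using t c by algebra
    finally have e2: "t \<otimes> d2 = t' \<otimes> d2" .
    show "t = t'"
    proof (cases "d1 = \<zero>")
      case False thus ?thesis using m_rcancel[OF False c(3) t] e1 by simp
    next
      case True hence "d2 \<noteq> \<zero>" using nz ad by auto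
      thus ?thesis using m_rcancel[OF _ c(4) t] e2 by simp
    qed
  qed
  thus ?thesis using img card_image by metis
qed

lemma lines_inter:
  assumes L1: "is_line R L1" and L2: "is_line R L2" and ne: "L1 \<noteq> L2"
  shows "card (L1 \<inter> L2) \<le> 1"
proof (rule ccontr)
  assume "\<not> card (L1 \<inter> L2) \<le> 1"
  hence "card (L1 \<inter> L2) \<ge> 2" by simp
  then obtain P Q where PQ: "P \<in> L1 \<inter> L2" "Q \<in> L1 \<inter> L2" "P \<noteq> Q"
  proof -
    have f: "finite (L1 \<inter> L2)" using \<open>card (L1 \<inter> L2) \<ge> 2\<close> card.infinite by force
    have "\<not> card (L1 \<inter> L2) \<le> Suc 0" using \<open>card (L1 \<inter> L2) \<ge> 2\<close> by simp
    hence "\<not> (\<forall>a\<in>L1 \<inter> L2. \<forall>b\<in>L1 \<inter> L2. a = b)" using card_le_Suc0_iff_eq[OF f] by blast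
    thus ?thesis using that by blast
  qed
  obtain a d where 1: "a \<in> plane R" "d \<in> plane R" "d \<noteq> (\<zero>, \<zero>)" "L1 = line_through R a d"
    using L1 unfolding is_line_def by blast
  obtain a' d' where 2: "a' \<in> plane R" "d' \<in> plane R" "d' \<noteq> (\<zero>, \<zero>)" "L2 = line_through R a' d'"
    using L2 unfolding is_line_def by blast
  have "L1 = L2"
    using line_eq_cross[OF 1(1-3), of P Q] line_eq_cross[OF 2(1-3), of P Q] PQ 1(4) 2(4) by auto
  thus False using ne by simp
qed

end


lemma cs_count:
  fixes r :: "'b \<Rightarrow> real"
  assumes "finite I"
  shows "(\<Sum>i\<in>I. r i)^2 \<le> real (card I) * (\<Sum>i\<in>I. (r i)^2)"
proof (cases "I = {}")
  case True thus ?thesis by simp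
next
  case False
  hence cI: "real (card I) > 0" using assms by (simp add: card_gt_0_iff)
  define m where "m = (\<Sum>i\<in>I. r i) / real (card I)"
  have "0 \<le> (\<Sum>i\<in>I. (r i - m)^2)" by (simp add: sum_nonneg)
  also have "\<dots> = (\<Sum>i\<in>I. (r i)^2) - 2 * m * (\<Sum>i\<in>I. r i) + real (card I) * m^2"
    by (simp add: power2_eq_square algebra_simps sum.distrib sum_subtractf sum_distrib_left sum_distrib_right)
  also have "\<dots> = (\<Sum>i\<in>I. (r i)^2) - (\<Sum>i\<in>I. r i)^2 / real (card I)"
    using cI by (simp add: m_def power2_eq_square field_simps)
  finally show ?thesis using cI by (simp add: field_simps)
qed

lemma comb_count:
  fixes N B :: "'p set" and L :: "'p \<Rightarrow> 'p set" and k :: nat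
  assumes fN: "finite N" and fB: "finite B"
    and k: "\<And>x. x \<in> N \<Longrightarrow> card (L x \<inter> B) = k"
    and one: "\<And>x y. x \<in> N \<Longrightarrow> y \<in> N \<Longrightarrow> x \<noteq> y \<Longrightarrow> card (L x \<inter> L y \<inter> B) \<le> 1"
  shows "(real (card N) * real k)^2 \<le> real (card B) * (real (card N) * (real (card N) + real k - 1))"
proof -
  define r where "r b = (\<Sum>x\<in>N. if b \<in> L x then 1 else 0 :: real)" for b
  have S1: "(\<Sum>b\<in>B. r b) = real (card N) * real k"
  proof -
    have "(\<Sum>b\<in>B. r b) = (\<Sum>x\<in>N. \<Sum>b\<in>B. if b \<in> L x then 1 else 0 :: real)"
      unfolding r_def by (rule sum.swap)
    also have "\<dots> = (\<Sum>x\<in>N. real (card (L x \<inter> B)))"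
    proof (rule sum.cong[OF refl])
      fix x assume "x \<in> N"
      have "(\<Sum>b\<in>B. if b \<in> L x then 1 else 0 :: real) = real (card {b\<in>B. b \<in> L x})"
        using sum.inter_filter[OF fB, of "\<lambda>_. 1::real", symmetric] by simp
      also have "{b\<in>B. b \<in> L x} = L x \<inter> B" by auto
      finally show "(\<Sum>b\<in>B. if b \<in> L x then 1 else 0 :: real) = real (card (L x \<inter> B))" by simp
    qed
    also have "\<dots> = (\<Sum>x\<in>N. real k)" using k by simp
    finally show ?thesis by simp
  qed
  have S2: "(\<Sum>b\<in>B. (r b)^2) \<le> real (card N) * (real (card N) + real k - 1)"
  proof -
    have "(\<Sum>b\<in>B. (r b)^2) = (\<Sum>b\<in>B. \<Sum>x\<in>N. \<Sum>y\<in>N. if b \<in> L x \<inter> L y then 1 else 0 :: real)"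
      unfolding r_def power2_eq_square sum_product by (intro sum.cong refl) auto
    also have "\<dots> = (\<Sum>x\<in>N. \<Sum>y\<in>N. \<Sum>b\<in>B. if b \<in> L x \<inter> L y then 1 else 0 :: real)"
      by (simp add: sum.swap[of _ B] sum.swap[of _ B N])
    also have "\<dots> = (\<Sum>x\<in>N. \<Sum>y\<in>N. real (card (L x \<inter> L y \<inter> B)))"
    proof (intro sum.cong refl)
      fix x y
      have "(\<Sum>b\<in>B. if b \<in> L x \<inter> L y then 1 else 0 :: real) = real (card {b\<in>B. b \<in> L x \<inter> L y})"
        using sum.inter_filter[OF fB, of "\<lambda>_. 1::real", symmetric] by simp
      also have "{b\<in>B. b \<in> L x \<inter> L y} = L x \<inter> L y \<inter> B" by auto
      finally show "(\<Sum>b\<in>B. if b \<in> L x \<inter> L y then 1 else 0 :: real) = real (card (L x \<inter> L y \<inter> B))" by simp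
    qed
    also have "\<dots> \<le> (\<Sum>x\<in>N. real k + (real (card N) - 1))"
    proof (rule sum_mono)
      fix x assume x: "x \<in> N"
      have "(\<Sum>y\<in>N. real (card (L x \<inter> L y \<inter> B))) = real (card (L x \<inter> L x \<inter> B)) + (\<Sum>y\<in>N - {x}. real (card (L x \<inter> L y \<inter> B)))"
        using fN x by (simp add: sum.remove)
      also have "\<dots> \<le> real k + (\<Sum>y\<in>N - {x}. 1)"
        using k[OF x] one[OF x] by (intro add_mono sum_mono) auto
      also have "(\<Sum>y\<in>N - {x}. (1::real)) = real (card N) - 1"
      proof -
        have "0 < card N" using fN x card_gt_0_iff by blast
        hence "1 \<le> card N" by simp
        hence "real (card N - 1) = real (card N) - 1" by (simp add: of_nat_diff)
        moreover have "card (N - {x}) = card N - 1" using fN x by simp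
        ultimately show ?thesis by simp
      qed
      finally show "(\<Sum>y\<in>N. real (card (L x \<inter> L y \<inter> B))) \<le> real k + (real (card N) - 1)" .
    qed
    also have "\<dots> = real (card N) * (real (card N) + real k - 1)" by (simp add: algebra_simps)
    finally show ?thesis .
  qed
  have "(real (card N) * real k)^2 \<le> real (card B) * (\<Sum>b\<in>B. (r b)^2)"
    using cs_count[OF fB, of r] S1 by simp
  also have "\<dots> \<le> real (card B) * (real (card N) * (real (card N) + real k - 1))"
    using S2 by (intro mult_left_mono) auto
  finally show ?thesis .
qed

lemma final_arith:
  fixes n b q :: real
  assumes q: "q \<ge> 2" and n: "n \<ge> 0" and nb: "n + b = q^2"
    and h: "(n * (q - 1))^2 \<le> b * (n * (n + (q - 1) - 1))"
  shows "b \<ge> 2 * q^2 / 3 - 3 * q"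
proof (cases "n = 0")
  case True
  have "q * q \<ge> 0" using q by simp
  moreover have "b = q * q" using True nb by (simp add: power2_eq_square)
  ultimately have "2 * (q * q) / 3 - 3 * q \<le> b" using q by linarith
  thus ?thesis by (simp add: power2_eq_square)
next
  case False
  hence np: "n > 0" using n by simp
  have h2: "n * (q - 1)^2 \<le> b * (n + q - 2)"
  proof -
    have "n * (n * (q - 1)^2) \<le> n * (b * (n + q - 2))" using h by (simp add: power2_eq_square algebra_simps)
    thus ?thesis using np by simp
  qed
  have bdef: "b = q^2 - n" using nb by simp
  have "b * (n + q - 2) - n * (q - 1)^2 = q^3 - 2*q^2 - n*n + n*q + n"
    unfolding bdef by (simp add: power2_eq_square power3_eq_cube algebra_simps)
  moreover have "q^2 \<ge> 0" by simp
  ultimately have "n * n - n * q - n \<le> q^3" using h2 by linarith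
  hence h3: "n * n - n * (q + 1) \<le> q^3" by (simp add: algebra_simps)
  show ?thesis
  proof (rule ccontr)
    assume "\<not> ?thesis"
    hence nbig: "n > q^2/3 + 3*q" using nb by simp
    have "(q^2/3 + 3*q) * (q^2/3 + 2*q - 1) < n * (n - q - 1)"
    proof -
      have qq: "q * q \<ge> 0" using q by simp
      have n1: "q^2/3 + 3*q < n" using nbig .
      have n2: "q^2/3 + 2*q - 1 < n - q - 1" using nbig by linarith
      have qq2: "q^2 \<ge> 0" by simp
      have p1: "0 \<le> q^2/3 + 2*q - 1" using q qq2 by linarith
      have p2: "0 \<le> q^2/3 + 3*q" using q qq2 by linarith
      have p3: "0 < n" using n1 p2 by linarith
      show ?thesis by (rule mult_strict_mono[OF n1 n2 p3 p1])
    qed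
    moreover have "(q^2/3 + 3*q) * (q^2/3 + 2*q - 1) \<ge> q^3"
    proof -
      have "(q^2/3 + 3*q) * (q^2/3 + 2*q - 1) - q^3 = q^4/9 + 2*q^3/3 + 17*q^2/3 - 3*q"
        by (simp add: power2_eq_square power3_eq_cube power4_eq_xxxx field_simps)
      moreover have "17*q^2/3 - 3*q \<ge> 0" using q by (simp add: power2_eq_square)
      moreover have "q^4/9 + 2*q^3/3 \<ge> 0" using q by simp
      ultimately show ?thesis by linarith
    qed
    ultimately show False using h3 by (simp add: algebra_simps)
  qed
qed


theorem mainTheorem2:
  shows "\<exists>C::real. C > 0 \<and>
    (\<forall>(R :: nat ring) B. field R \<longrightarrow> finite (carrier R) \<longrightarrow> nikodym_set R B \<longrightarrow>
       real (card B) \<ge> 2 * real (card (carrier R)) ^ 2 / 3 - C * real (card (carrier R)))"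
proof (intro exI[of _ 3] conjI allI impI)
  fix R :: "nat ring" and B
  assume fR: "field R" and fin: "finite (carrier R)" and nik: "nikodym_set R B"
  interpret field R by (rule fR)
  define q where "q = card (carrier R)"
  have "{\<zero>\<^bsub>R\<^esub>, \<one>\<^bsub>R\<^esub>} \<subseteq> carrier R" by simp
  hence "card {\<zero>\<^bsub>R\<^esub>, \<one>\<^bsub>R\<^esub>} \<le> q" unfolding q_def using fin card_mono by blast
  hence q2: "q \<ge> 2" by simp
  have fP: "finite (plane R)" using fin by (simp add: plane_def)
  have cP: "card (plane R) = q * q" by (simp add: plane_def q_def card_cartesian_product)
  have BP: "B \<subseteq> plane R" using nik by (simp add: nikodym_set_def)
  define N where "N = plane R - B"
  have fB: "finite B" using BP fP finite_subset by blast
  have fN: "finite N" using fP by (simp add: N_def)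
  have cNB: "card N + card B = q * q"
    using card_Diff_subset[OF fB BP] card_mono[OF fP BP] cP unfolding N_def by simp
  have exL: "\<exists>L. is_line R L \<and> L \<inter> N = {x}" if "x \<in> N" for x
    using nik that unfolding nikodym_set_def N_def by blast
  define L where "L x = (SOME L. is_line R L \<and> L \<inter> N = {x})" for x
  have Lp: "is_line R (L x) \<and> L x \<inter> N = {x}" if "x \<in> N" for x
    unfolding L_def using someI_ex[OF exL[OF that]] .
  have Lsub: "L x \<subseteq> plane R" and Lcard: "card (L x) = q" if xN: "x \<in> N" for x
  proof -
    obtain a d where "a \<in> plane R" "d \<in> plane R" "d \<noteq> (\<zero>\<^bsub>R\<^esub>, \<zero>\<^bsub>R\<^esub>)" "L x = line_through R a d"
      using Lp[OF xN] unfolding is_line_def by blast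
    thus "L x \<subseteq> plane R" "card (L x) = q"
      using line_subset_plane line_card q_def by auto
  qed
  have k: "card (L x \<inter> B) = q - 1" if x: "x \<in> N" for x
  proof -
    have "L x \<inter> B = L x - {x}" using Lp[OF x] Lsub[OF x] BP unfolding N_def by blast
    moreover have "x \<in> L x" using Lp[OF x] by blast
    moreover have "finite (L x)" using Lsub[OF x] fP finite_subset by blast
    ultimately show ?thesis using Lcard[OF x] by simp
  qed
  have one: "card (L x \<inter> L y \<inter> B) \<le> 1" if "x \<in> N" "y \<in> N" "x \<noteq> y" for x y
  proof -
    have "L x \<noteq> L y" using Lp[OF that(1)] Lp[OF that(2)] that(3) by auto
    hence "card (L x \<inter> L y) \<le> 1" using lines_inter Lp that by blast
    moreover have "finite (L x \<inter> L y)" using Lsub[OF that(1)] fP finite_subset by blast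
    ultimately show ?thesis using card_mono[of "L x \<inter> L y" "L x \<inter> L y \<inter> B"] by force
  qed
  have C: "(real (card N) * real (q - 1))^2 \<le> real (card B) * (real (card N) * (real (card N) + real (q - 1) - 1))"
    by (rule comb_count[OF fN fB k one])
  have rq: "real (q - 1) = real q - 1" using q2 by (simp add: of_nat_diff)
  have "real (card B) \<ge> 2 * (real q)^2 / 3 - 3 * real q"
  proof (rule final_arith)
    show "real q \<ge> 2" using q2 by simp
    show "real (card N) \<ge> 0" by simp
    show "real (card N) + real (card B) = (real q)^2"
      using cNB by (metis of_nat_add of_nat_mult power2_eq_square)
    show "(real (card N) * (real q - 1))^2 \<le> real (card B) * (real (card N) * (real (card N) + (real q - 1) - 1))"
      using C rq by simp
  qed
  thus "real (card B) \<ge> 2 * real (card (carrier R)) ^ 2 / 3 - 3 * real (card (carrier R))"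
    unfolding q_def .
qed (simp)

end
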